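(* Let $k, m \in \mathbb{N}$ with $k \ge 2$ and $m \ge 4$, and let $f$ be a valid bounds-function. If $\mathrm{pdp}_f(k,m) = \emptyset$, then $\mathrm{minvdeg}(\mathcal{MU}_{\delta=k}) < m$.
   Context: Literals come with a fixed-point-free involution $x \mapsto \overline{x}$; variables are positive literals. A clause is a finite set $C$ of literals with $C \cap \overline{C} = \emptyset$; a clause-set is a finite set of clauses. $\delta(F) = |F| - |\mathrm{var}(F)|$. $\mathcal{MU}_{\delta=k}$ is the class of minimally unsatisfiable clause-sets (unsatisfiable, but satisfiable after removing any clause) of deficiency $k$. $\mathrm{ld}_F(x)$ is the number of clauses containing $x$, $\mathrm{vdeg}_F(v) = \mathrm{ld}_F(v)+\mathrm{ld}_F(\overline{v})$, $\mathrm{minvdeg}(F) = \min_{v \in \mathrm{var}(F)}\mathrm{vdeg}_F(v)$; for a class $\mathcal{D}$, $\mathrm{minvdeg}(\mathcal{D})$ is the supremum of $\mathrm{minvdeg}(F)$ over $F \in \mathcal{D}$ with $\mathrm{var}(F) \ne \emptyset$. Let $\mu(k) = \mathrm{minvdeg}(\mathcal{MU}_{\delta=k})$. A valid bounds-function is a function $f : \mathbb{N} \to \mathbb{N} \cup \{+\infty\}$ with $f(1) = 2$, $f$ monotonically increasing, and $\mu(k) \le f(k)$ for all $k \in \mathbb{N}$. For $k \ge 2$, $m \ge 4$, the set $\mathrm{pdp}_f(k,m)$ of potential degree-pairs is the set of pairs $(e_0,e_1) \in \mathbb{N}^2$ with: (i) $e_0, e_1 \ge 2$; (ii) $e_0,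 e_1 \le k$; (iii) $e_0 + e_1 = m$; (iv) $e_0 \le e_1$; (v) $f(k - e_\varepsilon + 1) + e_\varepsilon \ge m$ for both $\varepsilon \in \{0,1\}$. *)

theory Defs
  imports Main "HOL-Library.Extended_Nat"
begin

datatype lit = Pos nat | Neg nat

fun comp :: "lit \<Rightarrow> lit" where
  "comp (Pos v) = Neg v"
| "comp (Neg v) = Pos v"

fun var_lit :: "lit \<Rightarrow> nat" where
  "var_lit (Pos v) = v"
| "var_lit (Neg v) = v"

definition is_clause :: "lit set \<Rightarrow> bool" where
  "is_clause C \<longleftrightarrow> finite C \<and> C \<inter> comp ` C = {}"

definition is_clause_set :: "lit set set \<Rightarrow> bool" where
  "is_clause_set F \<longleftrightarrow> finite F \<and> (\<forall>C\<in>F. is_clause C)"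

definition var :: "lit set set \<Rightarrow> nat set" where
  "var F = (\<Union>C\<in>F. var_lit ` C)"

fun lit_true :: "(nat \<Rightarrow> bool) \<Rightarrow> lit \<Rightarrow> bool" where
  "lit_true \<phi> (Pos v) = \<phi> v"
| "lit_true \<phi> (Neg v) = (\<not> \<phi> v)"

definition satisfiable :: "lit set set \<Rightarrow> bool" where
  "satisfiable F \<longleftrightarrow> (\<exists>\<phi>. \<forall>C\<in>F. \<exists>x\<in>C. lit_true \<phi> x)"

definition MU :: "lit set set \<Rightarrow> bool" where
  "MU F \<longleftrightarrow> is_clause_set F \<and> \<not> satisfiable F \<and> (\<forall>C\<in>F. satisfiable (F - {C}))"

definition deficiency :: "lit set set \<Rightarrow> int" where
  "deficiency F = int (card F) - int (card (var F))"

definition MU_delta :: "nat \<Rightarrow> lit set set set" where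
  "MU_delta k = {F. MU F \<and> deficiency F = int k}"

definition ld :: "lit set set \<Rightarrow> lit \<Rightarrow> nat" where
  "ld F x = card {C\<in>F. x \<in> C}"

definition vdeg :: "lit set set \<Rightarrow> nat \<Rightarrow> nat" where
  "vdeg F v = ld F (Pos v) + ld F (Neg v)"

definition minvdeg :: "lit set set \<Rightarrow> nat" where
  "minvdeg F = Min (vdeg F ` var F)"

definition minvdeg_class :: "lit set set set \<Rightarrow> enat" where
  "minvdeg_class D = Sup {enat (minvdeg F) | F. F \<in> D \<and> var F \<noteq> {}}"

definition mu :: "nat \<Rightarrow> enat" where
  "mu k = minvdeg_class (MU_delta k)"

definition valid_bounds_function :: "(nat \<Rightarrow> enat) \<Rightarrow> bool" where
  "valid_bounds_function f \<longleftrightarrow> f 1 = 2 \<and> mono_on {1..} f \<and> (\<forall>k\<ge>1. mu k \<le> f k)"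

definition pdp :: "(nat \<Rightarrow> enat) \<Rightarrow> nat \<Rightarrow> nat \<Rightarrow> (nat \<times> nat) set" where
  "pdp f k m = {(e0, e1). e0 \<ge> 2 \<and> e1 \<ge> 2 \<and> e0 \<le> k \<and> e1 \<le> k \<and> e0 + e1 = m \<and> e0 \<le> e1
      \<and> f (k - e0 + 1) + enat e0 \<ge> enat m \<and> f (k - e1 + 1) + enat e1 \<ge> enat m}"

end

theory Submission
  imports Defs
begin

lemma var_comp[simp]: "var_lit (comp l) = var_lit l" by (cases l) auto
lemma comp_comp[simp]: "comp (comp l) = l" by (cases l) auto
lemma lit_true_comp[simp]: "lit_true \<phi> (comp l) = (\<not> lit_true \<phi> l)" by (cases l) auto
lemma comp_neq[simp]: "comp l \<noteq> l" by (cases l) auto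
lemma lit_true_cong: "\<phi> (var_lit l) = \<psi> (var_lit l) \<Longrightarrow> lit_true \<phi> l = lit_true \<psi> l"
  by (cases l) auto
lemma lit_of_var: "var_lit l = w \<Longrightarrow> l = Pos w \<or> l = Neg w" by (cases l) auto

lemma var_Un[simp]: "var (A \<union> B) = var A \<union> var B" by (auto simp: var_def)
lemma var_mono: "A \<subseteq> B \<Longrightarrow> var A \<subseteq> var B" by (auto simp: var_def)
lemma var_empty[simp]: "var {} = {}" by (auto simp: var_def)
lemma var_insert[simp]: "var (insert C A) = var_lit ` C \<union> var A" by (auto simp: var_def)
lemma finite_var: "finite F \<Longrightarrow> \<forall>C\<in>F. finite C \<Longrightarrow> finite (var F)"
  by (auto simp: var_def)
lemma var_iff: "w \<in> var F \<longleftrightarrow> (\<exists>C\<in>F. w \<in> var_lit ` C)" by (auto simp: var_def)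

lemma hall_sat:
  assumes "finite F" "\<forall>C\<in>F. finite C" "\<forall>H\<subseteq>F. card H \<le> card (var H - V)"
  shows "\<exists>\<phi>. (\<forall>u\<in>V. \<phi> u = \<psi> u) \<and> (\<forall>C\<in>F. \<exists>l\<in>C. lit_true \<phi> l)"
  using assms
proof (induction "card F" arbitrary: F V \<psi> rule: less_induct)
  case less
  show ?case
  proof (cases "F = {}")
    case True then show ?thesis by auto
  next
    case Fne: False
    show ?thesis
    proof (cases "\<exists>H. H \<subseteq> F \<and> H \<noteq> {} \<and> H \<noteq> F \<and> card (var H - V) = card H")
      case True
      then obtain H where H: "H \<subseteq> F" "H \<noteq> {}" "H \<noteq> F" "card (var H - V) = card H" by blast
      have fH: "finite H" using H(1) less.prems(1) finite_subset by blast
      have cH: "card H < card F" using H less.prems(1) by (intro psubset_card_mono) auto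
      obtain \<phi>1 where p1: "\<forall>u\<in>V. \<phi>1 u = \<psi> u" "\<forall>C\<in>H. \<exists>l\<in>C. lit_true \<phi>1 l"
      proof -
        have a: "\<forall>C\<in>H. finite C" using less.prems(2) H(1) by blast
        have b: "\<forall>H'\<subseteq>H. card H' \<le> card (var H' - V)" using less.prems(3) H(1) by blast
        show ?thesis using less.hyps[OF cH fH a b, of \<psi>] that by blast
      qed
      have fvH: "finite (var H)" using finite_var fH H(1) less.prems(2) by blast
      have cond: "\<forall>K\<subseteq>F - H. card K \<le> card (var K - (V \<union> var H))"
      proof (intro allI impI)
        fix K assume K: "K \<subseteq> F - H"
        have fK: "finite K" using K less.prems(1) finite_subset by blast
        have fvK: "finite (var K)" using finite_var fK K less.prems(2) by blast
        have "H \<union> K \<subseteq> F" using H(1) K by blast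
        then have "card (H \<union> K) \<le> card (var (H \<union> K) - V)" using less.prems(3) by blast
        moreover have "card (H \<union> K) = card H + card K" using K fH fK by (subst card_Un_disjoint) auto
        moreover have "var (H \<union> K) - V = (var H - V) \<union> (var K - (V \<union> var H))" by auto
        moreover have "card ((var H - V) \<union> (var K - (V \<union> var H))) = card (var H - V) + card (var K - (V \<union> var H))"
          using fvH fvK by (subst card_Un_disjoint) auto
        ultimately show "card K \<le> card (var K - (V \<union> var H))" using H(4) by simp
      qed
      have cFH: "card (F - H) < card F" using H less.prems(1) by (intro psubset_card_mono) auto
      obtain \<phi>2 where p2: "\<forall>u\<in>V \<union> var H. \<phi>2 u = \<phi>1 u" "\<forall>C\<in>F - H. \<exists>l\<in>C. lit_true \<phi>2 l"
      proof -
        have a: "\<forall>C\<in>F - H. finite C" using less.prems(2) by blast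
        have fF: "finite (F - H)" using less.prems(1) by blast
        show ?thesis using less.hyps[OF cFH fF a cond, of \<phi>1] that by blast
      qed
      have "\<forall>C\<in>H. \<exists>l\<in>C. lit_true \<phi>2 l"
      proof
        fix C assume C: "C \<in> H"
        then obtain l where l: "l \<in> C" "lit_true \<phi>1 l" using p1 by blast
        have "var_lit l \<in> var H" using C l by (auto simp: var_def)
        then have "\<phi>2 (var_lit l) = \<phi>1 (var_lit l)" using p2(1) by blast
        then have "lit_true \<phi>2 l" using l(2) lit_true_cong by metis
        then show "\<exists>l\<in>C. lit_true \<phi>2 l" using l by blast
      qed
      then have "\<forall>C\<in>F. \<exists>l\<in>C. lit_true \<phi>2 l" using p2(2) by blast
      moreover have "\<forall>u\<in>V. \<phi>2 u = \<psi> u" using p1(1) p2(1) by simp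
      ultimately show ?thesis by blast
    next
      case False
      note noH = False
      obtain C where C: "C \<in> F" using Fne by blast
      have "card {C} \<le> card (var {C} - V)" using less.prems(3) C by auto
      then have "var {C} - V \<noteq> {}" by (metis card.empty card.insert empty_iff finite.emptyI not_one_le_zero One_nat_def)
      then obtain l where l: "l \<in> C" "var_lit l \<notin> V" by (auto simp: var_def)
      define u where "u = var_lit l"
      define \<psi>' where "\<psi>' = \<psi>(u := (l = Pos u))"
      have lt: "lit_true \<psi>' l" unfolding \<psi>'_def u_def by (cases l) auto
      have cond: "\<forall>K\<subseteq>F - {C}. card K \<le> card (var K - insert u V)"
      proof (intro allI impI)
        fix K assume K: "K \<subseteq> F - {C}"
        show "card K \<le> card (var K - insert u V)"
        proof (cases "K = {}")
          case True then show ?thesis by simp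
        next
          case False
          have fK: "finite K" using K less.prems(1) finite_subset by blast
          have fvK: "finite (var K)" using finite_var fK K less.prems(2) by blast
          have "card (var K - V) \<noteq> card K" using noH K False C by blast
          moreover have "card K \<le> card (var K - V)" using less.prems(3) K by auto
          moreover have "card (var K - V) \<le> card (var K - insert u V) + 1"
          proof -
            have "var K - V \<subseteq> insert u (var K - insert u V)" by auto
            then have "card (var K - V) \<le> card (insert u (var K - insert u V))"
              using fvK by (intro card_mono) auto
            also have "\<dots> \<le> card (var K - insert u V) + 1" using fvK by (simp add: card_insert_if)
            finally show ?thesis .
          qed
          ultimately show ?thesis by linarith
        qed
      qed
      have fF: "finite (F - {C})" using less.prems(1) by auto
      have cF: "card (F - {C}) < card F" using C less.prems(1) by (meson card_Diff1_less)
      obtain \<phi> where p: "\<forall>w\<in>insert u V. \<phi> w = \<psi>' w" "\<forall>D\<in>F - {C}. \<exists>l\<in>D. lit_true \<phi> l"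
      proof -
        have a: "\<forall>C\<in>F - {C}. finite C" using less.prems(2) by blast
        show ?thesis using less.hyps[OF cF fF a cond, of \<psi>'] that by blast
      qed
      have "lit_true \<phi> l" using lt p(1) lit_true_cong[of \<phi> l \<psi>'] u_def by auto
      moreover have "\<forall>w\<in>V. \<phi> w = \<psi> w" using p(1) l(2) u_def \<psi>'_def by auto
      moreover have "\<forall>D\<in>F. \<exists>l\<in>D. lit_true \<phi> l" using p(2) l(1) \<open>lit_true \<phi> l\<close> by blast
      ultimately show ?thesis by blast
    qed
  qed
qed



lemma MU_fin: "MU F \<Longrightarrow> finite F" by (simp add: MU_def is_clause_set_def)
lemma MU_cl: "MU F \<Longrightarrow> C \<in> F \<Longrightarrow> is_clause C" by (simp add: MU_def is_clause_set_def)
lemma MU_clfin: "MU F \<Longrightarrow> \<forall>C\<in>F. finite C" by (simp add: MU_def is_clause_set_def is_clause_def)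

lemma tarsi:
  assumes mu: "MU F"
  shows "card (var F) < card F"
proof (rule ccontr)
  assume ne: "\<not> card (var F) < card F"
  have fF: "finite F" using MU_fin[OF mu] .
  have cf: "\<forall>C\<in>F. finite C" using MU_clfin[OF mu] .
  have Fne: "F \<noteq> {}" using mu by (auto simp: MU_def satisfiable_def)
  define d where "d H = int (card H) - int (card (var H))" for H
  have fS: "finite (d ` Pow F)" using fF by simp
  obtain H0 where H0: "H0 \<in> Pow F" "d H0 = Max (d ` Pow F)"
    using Max_in[OF fS] by (metis Pow_bottom empty_iff image_iff image_is_empty)
  have mx0: "\<forall>H\<subseteq>F. d H \<le> d H0" using H0 fS by auto
  define H1 where "H1 = (if H0 = F then {} else H0)"
  have dF: "d F \<le> 0" using ne unfolding d_def by simp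
  have H1: "H1 \<subseteq> F" "H1 \<noteq> F" using H0 Fne unfolding H1_def by auto
  have mx: "\<forall>H\<subseteq>F. d H \<le> d H1"
  proof (cases "H0 = F")
    case True
    then show ?thesis using mx0 dF unfolding H1_def d_def by auto
  next
    case False then show ?thesis using mx0 unfolding H1_def by auto
  qed
  obtain C where C: "C \<in> F" "C \<notin> H1" using H1 by blast
  obtain \<psi> where psi: "\<forall>D\<in>F - {C}. \<exists>l\<in>D. lit_true \<psi> l"
    using mu C by (auto simp: MU_def satisfiable_def)
  have psiH: "\<forall>D\<in>H1. \<exists>l\<in>D. lit_true \<psi> l" using psi C H1 by blast
  have fH1: "finite H1" using H1 fF finite_subset by blast
  have fvH1: "finite (var H1)" using finite_var fH1 H1 cf by blast
  have cond: "\<forall>K\<subseteq>F - H1. card K \<le> card (var K - var H1)"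
  proof (intro allI impI)
    fix K assume K: "K \<subseteq> F - H1"
    have fK: "finite K" using K fF finite_subset by blast
    have fvK: "finite (var K)" using finite_var fK K cf by blast
    have "H1 \<union> K \<subseteq> F" using H1 K by blast
    then have "d (H1 \<union> K) \<le> d H1" using mx by blast
    moreover have "card (H1 \<union> K) = card H1 + card K" using K fH1 fK by (subst card_Un_disjoint) auto
    moreover have "var (H1 \<union> K) = var H1 \<union> (var K - var H1)" by auto
    moreover have "card (var H1 \<union> (var K - var H1)) = card (var H1) + card (var K - var H1)"
      using fvH1 fvK by (subst card_Un_disjoint) auto
    ultimately show "card K \<le> card (var K - var H1)" unfolding d_def by simp
  qed
  have fFH: "finite (F - H1)" using fF by blast
  have cfH: "\<forall>C\<in>F - H1. finite C" using cf by blast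
  obtain \<phi> where phi: "\<forall>u\<in>var H1. \<phi> u = \<psi> u" "\<forall>D\<in>F - H1. \<exists>l\<in>D. lit_true \<phi> l"
    using hall_sat[OF fFH cfH cond, of \<psi>] by blast
  have "\<forall>D\<in>H1. \<exists>l\<in>D. lit_true \<phi> l"
  proof
    fix D assume D: "D \<in> H1"
    then obtain l where l: "l \<in> D" "lit_true \<psi> l" using psiH by blast
    have "var_lit l \<in> var H1" using D l by (auto simp: var_def)
    then have "\<phi> (var_lit l) = \<psi> (var_lit l)" using phi(1) by blast
    then have "lit_true \<phi> l" using l(2) lit_true_cong by metis
    then show "\<exists>l\<in>D. lit_true \<phi> l" using l by blast
  qed
  then have "satisfiable F" using phi(2) unfolding satisfiable_def by blast
  then show False using mu by (simp add: MU_def)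
qed



definition saturated :: "lit set set \<Rightarrow> bool" where
  "saturated F \<longleftrightarrow> MU F \<and> (\<forall>C\<in>F. \<forall>z. var_lit z \<in> var F \<longrightarrow> z \<notin> C \<longrightarrow> comp z \<notin> C
      \<longrightarrow> satisfiable (insert (C \<union> {z}) (F - {C})))"

definition res :: "lit set set \<Rightarrow> lit \<Rightarrow> lit set set" where
  "res F y = (\<lambda>C. C - {comp y}) ` {C\<in>F. y \<notin> C}"

definition upd :: "(nat \<Rightarrow> bool) \<Rightarrow> lit \<Rightarrow> (nat \<Rightarrow> bool)" where
  "upd \<phi> y = \<phi>(var_lit y := (y = Pos (var_lit y)))"

lemma upd_y: "lit_true (upd \<phi> y) y" by (cases y) (auto simp: upd_def)
lemma upd_other: "var_lit l \<noteq> var_lit y \<Longrightarrow> lit_true (upd \<phi> y) l = lit_true \<phi> l"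
  by (rule lit_true_cong) (simp add: upd_def)
lemma same_var: "var_lit l = var_lit y \<Longrightarrow> l = y \<or> l = comp y"
  by (cases l; cases y) auto

lemma clause_not_both: "is_clause C \<Longrightarrow> l \<in> C \<Longrightarrow> comp l \<notin> C"
  unfolding is_clause_def by force

lemma unsat_sat: "MU F \<Longrightarrow> (\<forall>D\<in>F. \<exists>l\<in>D. lit_true \<phi> l) \<Longrightarrow> False"
  unfolding MU_def satisfiable_def by blast

lemma W:
  assumes sat: "saturated F" and vy: "var_lit y \<in> var F" and C: "C \<in> F" "y \<notin> C"
  shows "\<exists>\<psi>. (\<forall>l\<in>C. \<not> lit_true \<psi> l) \<and> lit_true \<psi> y \<and> (\<forall>D\<in>F-{C}. \<exists>l\<in>D. lit_true \<psi> l)"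
proof (cases "comp y \<in> C")
  case True
  have mu: "MU F" using sat by (simp add: saturated_def)
  obtain \<psi> where psi: "\<forall>D\<in>F-{C}. \<exists>l\<in>D. lit_true \<psi> l" using mu C by (auto simp: MU_def satisfiable_def)
  have f: "\<forall>l\<in>C. \<not> lit_true \<psi> l"
  proof (rule ccontr)
    assume "\<not> (\<forall>l\<in>C. \<not> lit_true \<psi> l)"
    then have "\<forall>D\<in>F. \<exists>l\<in>D. lit_true \<psi> l" using psi by blast
    then show False by (rule unsat_sat[OF mu])
  qed
  then have "lit_true \<psi> y" using True by fastforce
  then show ?thesis using f psi by blast
next
  case False
  have mu: "MU F" using sat by (simp add: saturated_def)
  obtain \<psi> where psi: "\<forall>D\<in>insert (C \<union> {y}) (F - {C}). \<exists>l\<in>D. lit_true \<psi> l"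
    using sat C vy False unfolding saturated_def satisfiable_def by blast
  have f: "\<forall>l\<in>C. \<not> lit_true \<psi> l"
  proof (rule ccontr)
    assume "\<not> (\<forall>l\<in>C. \<not> lit_true \<psi> l)"
    then have "\<forall>D\<in>F. \<exists>l\<in>D. lit_true \<psi> l" using psi by blast
    then show False by (rule unsat_sat[OF mu])
  qed
  then have "lit_true \<psi> y" using psi by auto
  then show ?thesis using f psi by blast
qed

lemma res_inj:
  assumes sat: "saturated F" and vy: "var_lit y \<in> var F"
  shows "inj_on (\<lambda>C. C - {comp y}) {C\<in>F. y \<notin> C}"
proof (rule inj_onI)
  fix C D assume C: "C \<in> {C\<in>F. y \<notin> C}" and D: "D \<in> {C\<in>F. y \<notin> C}" and eq: "C - {comp y} = D - {comp y}"
  show "C = D"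
  proof (rule ccontr)
    assume ne: "C \<noteq> D"
    obtain \<psi> where psi: "\<forall>l\<in>C. \<not> lit_true \<psi> l" "lit_true \<psi> y" "\<forall>D\<in>F-{C}. \<exists>l\<in>D. lit_true \<psi> l"
      using W[OF sat vy] C by blast
    obtain l where l: "l \<in> D" "lit_true \<psi> l" using psi(3) D ne by blast
    have "l \<noteq> comp y" using l psi(2) by auto
    then have "l \<in> C" using eq l by blast
    then show False using psi(1) l by blast
  qed
qed

lemma res_MU:
  assumes sat: "saturated F" and vy: "var_lit y \<in> var F"
  shows "MU (res F y)"
proof -
  have mu: "MU F" using sat by (simp add: saturated_def)
  have cs: "is_clause_set (res F y)"
  proof -
    have "finite (res F y)" using MU_fin[OF mu] unfolding res_def by simp
    moreover have "\<forall>D\<in>res F y. is_clause D"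
    proof
      fix D assume "D \<in> res F y"
      then obtain C where C: "C \<in> F" "D = C - {comp y}" unfolding res_def by blast
      have "is_clause C" using MU_cl[OF mu C(1)] .
      then show "is_clause D" using C(2) unfolding is_clause_def by blast
    qed
    ultimately show ?thesis unfolding is_clause_set_def by blast
  qed
  have uns: "\<not> satisfiable (res F y)"
  proof
    assume "satisfiable (res F y)"
    then obtain \<phi> where phi: "\<forall>E\<in>res F y. \<exists>l\<in>E. lit_true \<phi> l" by (auto simp: satisfiable_def)
    have "\<forall>C\<in>F. \<exists>l\<in>C. lit_true (upd \<phi> y) l"
    proof
      fix C assume C: "C \<in> F"
      show "\<exists>l\<in>C. lit_true (upd \<phi> y) l"
      proof (cases "y \<in> C")
        case True then show ?thesis using upd_y by blast
      next
        case False
        then have "C - {comp y} \<in> res F y" using C by (auto simp: res_def)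
        then obtain l where l: "l \<in> C" "l \<noteq> comp y" "lit_true \<phi> l" using phi by blast
        have "var_lit l \<noteq> var_lit y" using l False same_var by blast
        then show ?thesis using l upd_other by blast
      qed
    qed
    then show False by (rule unsat_sat[OF mu])
  qed
  have mn: "\<forall>E\<in>res F y. satisfiable (res F y - {E})"
  proof
    fix E assume "E \<in> res F y"
    then obtain C where C: "C \<in> F" "y \<notin> C" "E = C - {comp y}" by (auto simp: res_def)
    obtain \<psi> where psi: "\<forall>l\<in>C. \<not> lit_true \<psi> l" "lit_true \<psi> y" "\<forall>D\<in>F-{C}. \<exists>l\<in>D. lit_true \<psi> l"
      using W[OF sat vy C(1,2)] by blast
    have "\<forall>E'\<in>res F y - {E}. \<exists>l\<in>E'. lit_true \<psi> l"
    proof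
      fix E' assume E': "E' \<in> res F y - {E}"
      then obtain D where D: "D \<in> F" "y \<notin> D" "E' = D - {comp y}" by (auto simp: res_def)
      have "D \<noteq> C" using D C E' by auto
      then obtain l where l: "l \<in> D" "lit_true \<psi> l" using psi(3) D by blast
      have "l \<noteq> comp y" using l psi(2) by auto
      then show "\<exists>l\<in>E'. lit_true \<psi> l" using l D by blast
    qed
    then show "satisfiable (res F y - {E})" by (auto simp: satisfiable_def)
  qed
  show ?thesis using cs uns mn by (simp add: MU_def)
qed

lemma res_var: "var (res F y) \<subseteq> var F - {var_lit y}"
proof
  fix w assume "w \<in> var (res F y)"
  then obtain C l where C: "C \<in> F" "y \<notin> C" "l \<in> C" "l \<noteq> comp y" "w = var_lit l"
    by (auto simp: res_def var_def)
  have "var_lit l \<noteq> var_lit y" using C same_var by blast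
  then show "w \<in> var F - {var_lit y}" using C by (auto simp: var_def)
qed

lemma res_card:
  assumes sat: "saturated F" and vy: "var_lit y \<in> var F"
  shows "card (res F y) = card F - ld F y"
proof -
  have fF: "finite F" using sat MU_fin by (simp add: saturated_def)
  have "card (res F y) = card {C\<in>F. y \<notin> C}"
    unfolding res_def using res_inj[OF sat vy] by (rule card_image)
  also have "{C\<in>F. y \<notin> C} = F - {C\<in>F. y \<in> C}" by auto
  also have "card (F - {C\<in>F. y \<in> C}) = card F - card {C\<in>F. y \<in> C}"
    using fF by (intro card_Diff_subset) auto
  finally show ?thesis by (simp add: ld_def)
qed

lemma vdeg_card:
  assumes "is_clause_set F"
  shows "vdeg F w = card {C\<in>F. w \<in> var_lit ` C}"
proof -
  have fF: "finite F" using assms by (simp add: is_clause_set_def)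
  have eq: "{C\<in>F. w \<in> var_lit ` C} = {C\<in>F. Pos w \<in> C} \<union> {C\<in>F. Neg w \<in> C}"
  proof (intro set_eqI iffI)
    fix C assume "C \<in> {C\<in>F. w \<in> var_lit ` C}"
    then obtain l where l: "C \<in> F" "l \<in> C" "var_lit l = w" by auto
    have "l = Pos w \<or> l = Neg w" using lit_of_var[OF l(3)] .
    then show "C \<in> {C\<in>F. Pos w \<in> C} \<union> {C\<in>F. Neg w \<in> C}" using l(1,2) by auto
  next
    fix C assume "C \<in> {C\<in>F. Pos w \<in> C} \<union> {C\<in>F. Neg w \<in> C}"
    then have "C \<in> F" "Pos w \<in> C \<or> Neg w \<in> C" by auto
    moreover have "w = var_lit (Pos w)" "w = var_lit (Neg w)" by simp_all
    ultimately show "C \<in> {C\<in>F. w \<in> var_lit ` C}" by (metis (mono_tags, lifting) image_eqI mem_Collect_eq)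
  qed
  have dj: "{C\<in>F. Pos w \<in> C} \<inter> {C\<in>F. Neg w \<in> C} = {}"
  proof (rule ccontr)
    assume "{C\<in>F. Pos w \<in> C} \<inter> {C\<in>F. Neg w \<in> C} \<noteq> {}"
    then obtain C where C: "C \<in> F" "Pos w \<in> C" "Neg w \<in> C" by blast
    have "is_clause C" using assms C(1) by (simp add: is_clause_set_def)
    then have "comp (Pos w) \<notin> C" using C(2) by (rule clause_not_both)
    then show False using C(3) by simp
  qed
  have "card ({C\<in>F. Pos w \<in> C} \<union> {C\<in>F. Neg w \<in> C}) = card {C\<in>F. Pos w \<in> C} + card {C\<in>F. Neg w \<in> C}"
    by (rule card_Un_disjoint) (use fF dj in auto)
  then show ?thesis unfolding vdeg_def ld_def eq by simp
qed

lemma res_vdeg: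
  assumes sat: "saturated F" and vy: "var_lit y \<in> var F" and w: "w \<noteq> var_lit y"
  shows "vdeg (res F y) w = card {C\<in>F. y \<notin> C \<and> w \<in> var_lit ` C}"
proof -
  have mu: "MU (res F y)" using res_MU[OF sat vy] .
  have "vdeg (res F y) w = card {D\<in>res F y. w \<in> var_lit ` D}"
    using mu vdeg_card by (simp add: MU_def)
  also have "{D\<in>res F y. w \<in> var_lit ` D} = (\<lambda>C. C - {comp y}) ` {C\<in>F. y \<notin> C \<and> w \<in> var_lit ` C}"
  proof -
    have e: "w \<in> var_lit ` (C - {comp y}) \<longleftrightarrow> w \<in> var_lit ` C" for C
      using w by force
    show ?thesis unfolding res_def using e by auto
  qed
  also have "card \<dots> = card {C\<in>F. y \<notin> C \<and> w \<in> var_lit ` C}"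
  proof (rule card_image)
    show "inj_on (\<lambda>C. C - {comp y}) {C\<in>F. y \<notin> C \<and> w \<in> var_lit ` C}"
      by (rule inj_on_subset[OF res_inj[OF sat vy]]) blast
  qed
  finally show ?thesis .
qed

lemma pure:
  assumes mu: "MU F" and vz: "var_lit z \<in> var F"
  shows "\<exists>E\<in>F. z \<in> E"
proof (rule ccontr)
  assume no: "\<not> (\<exists>E\<in>F. z \<in> E)"
  obtain E l where E: "E \<in> F" "l \<in> E" "var_lit l = var_lit z" using vz by (auto simp: var_def)
  have "l = comp z" using E no same_var by blast
  with E have cE: "comp z \<in> E" by simp
  obtain \<phi> where phi: "\<forall>D\<in>F-{E}. \<exists>l\<in>D. lit_true \<phi> l" using mu E by (auto simp: MU_def satisfiable_def)
  have "\<forall>D\<in>F. \<exists>l\<in>D. lit_true (upd \<phi> (comp z)) l"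
  proof
    fix D assume D: "D \<in> F"
    show "\<exists>l\<in>D. lit_true (upd \<phi> (comp z)) l"
    proof (cases "comp z \<in> D")
      case True then show ?thesis using upd_y by blast
    next
      case False
      then have "D \<noteq> E" using cE by blast
      then obtain l where l: "l \<in> D" "lit_true \<phi> l" using phi D by blast
      have "l \<noteq> z" using no D l by blast
      then have "var_lit l \<noteq> var_lit (comp z)" using False l same_var[of l "comp z"] by auto
      then show ?thesis using l upd_other by blast
    qed
  qed
  then show False by (rule unsat_sat[OF mu])
qed



definition csize :: "lit set set \<Rightarrow> nat" where "csize G = (\<Sum>C\<in>G. card C)"

lemma clause_sub_lits:
  assumes "C \<in> G" "var G = V"
  shows "C \<subseteq> Pos ` V \<union> Neg ` V"
proof
  fix l assume l: "l \<in> C"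
  have "var_lit l \<in> V" using assms l by (auto simp: var_def)
  then show "l \<in> Pos ` V \<union> Neg ` V" by (cases l) auto
qed

lemma sat_step:
  assumes mu: "MU G" and C: "C \<in> G" and vz: "var_lit z \<in> var G" and z: "z \<notin> C" "comp z \<notin> C"
    and uns: "\<not> satisfiable (insert (C \<union> {z}) (G - {C}))"
  shows "MU (insert (C \<union> {z}) (G - {C}))" "C \<union> {z} \<notin> G - {C}"
    "var (insert (C \<union> {z}) (G - {C})) = var G"
proof -
  show nin: "C \<union> {z} \<notin> G - {C}"
  proof
    assume "C \<union> {z} \<in> G - {C}"
    then have "insert (C \<union> {z}) (G - {C}) = G - {C}" by blast
    then show False using uns mu C by (simp add: MU_def)
  qed
  have clC: "is_clause C" using MU_cl[OF mu C] .
  have cl: "is_clause (C \<union> {z})"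
  proof -
    have "finite (C \<union> {z})" using clC by (simp add: is_clause_def)
    moreover have "(C \<union> {z}) \<inter> comp ` (C \<union> {z}) = {}"
    proof (rule ccontr)
      assume "(C \<union> {z}) \<inter> comp ` (C \<union> {z}) \<noteq> {}"
      then obtain a b where ab: "a \<in> C \<union> {z}" "b \<in> C \<union> {z}" "a = comp b" by blast
      show False
      proof (cases "b = z")
        case True
        then show ?thesis using ab z by (metis Un_iff comp_neq singletonD)
      next
        case False
        then have b: "b \<in> C" using ab by blast
        show ?thesis
        proof (cases "a = z")
          case True
          then have "comp z = b" using ab by (metis comp_comp)
          then show ?thesis using b z by blast
        next
          case False
          then have "a \<in> C" using ab by blast
          then show ?thesis using clC b ab(3) clause_not_both by blast
        qed
      qed
    qed
    ultimately show ?thesis by (simp add: is_clause_def)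
  qed
  have cs: "is_clause_set (insert (C \<union> {z}) (G - {C}))"
    using mu cl by (auto simp: MU_def is_clause_set_def)
  have mn: "\<forall>E\<in>insert (C \<union> {z}) (G - {C}). satisfiable (insert (C \<union> {z}) (G - {C}) - {E})"
  proof
    fix E assume E: "E \<in> insert (C \<union> {z}) (G - {C})"
    show "satisfiable (insert (C \<union> {z}) (G - {C}) - {E})"
    proof (cases "E = C \<union> {z}")
      case True
      then have "insert (C \<union> {z}) (G - {C}) - {E} = G - {C}" using nin by blast
      then show ?thesis using mu C by (simp add: MU_def)
    next
      case False
      then have E': "E \<in> G" "E \<noteq> C" using E by auto
      have "satisfiable (G - {E})" using mu E'(1) unfolding MU_def by blast
      then obtain \<phi> where phi: "\<forall>D\<in>G - {E}. \<exists>l\<in>D. lit_true \<phi> l" unfolding satisfiable_def by blast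
      have "\<forall>D\<in>insert (C \<union> {z}) (G - {C}) - {E}. \<exists>l\<in>D. lit_true \<phi> l"
      proof
        fix D assume D: "D \<in> insert (C \<union> {z}) (G - {C}) - {E}"
        show "\<exists>l\<in>D. lit_true \<phi> l"
        proof (cases "D = C \<union> {z}")
          case True
          obtain l where "l \<in> C" "lit_true \<phi> l" using phi C E' by blast
          then show ?thesis using True by blast
        next
          case False then show ?thesis using D phi by blast
        qed
      qed
      then show ?thesis by (auto simp: satisfiable_def)
    qed
  qed
  show "MU (insert (C \<union> {z}) (G - {C}))" using cs uns mn by (simp add: MU_def)
  show "var (insert (C \<union> {z}) (G - {C})) = var G"
  proof
    show "var (insert (C \<union> {z}) (G - {C})) \<subseteq> var G" using vz C by (auto simp: var_def)
    show "var G \<subseteq> var (insert (C \<union> {z}) (G - {C}))"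
    proof
      fix w assume "w \<in> var G"
      then obtain D l where "D \<in> G" "l \<in> D" "w = var_lit l" by (auto simp: var_def)
      then show "w \<in> var (insert (C \<union> {z}) (G - {C}))" unfolding var_def
        by (cases "D = C") auto
    qed
  qed
qed

definition ext :: "lit set set \<Rightarrow> lit set set \<Rightarrow> bool" where
  "ext F G \<longleftrightarrow> (\<exists>g. bij_betw g F G \<and> (\<forall>C\<in>F. C \<subseteq> g C))"

lemma ext_step:
  assumes e: "ext F G" and C: "C \<in> G" and nin: "C \<union> {z} \<notin> G - {C}"
  shows "ext F (insert (C \<union> {z}) (G - {C}))"
proof -
  obtain g where g: "bij_betw g F G" "\<forall>C\<in>F. C \<subseteq> g C" using e by (auto simp: ext_def)
  define g1 where "g1 D = (if g D = C then C \<union> {z} else g D)" for D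
  obtain D0 where D0: "D0 \<in> F" "g D0 = C" using g(1) C by (auto simp: bij_betw_def)
  have inj: "inj_on g1 F"
  proof (rule inj_onI)
    fix a b assume ab: "a \<in> F" "b \<in> F" "g1 a = g1 b"
    have ga: "g a \<in> G" "g b \<in> G" using g(1) ab by (auto simp: bij_betw_def)
    have "g a = g b"
    proof (cases "g a = C"; cases "g b = C")
      assume "g a = C" "g b = C" then show ?thesis by simp
    next
      assume "g a = C" "g b \<noteq> C"
      then have "g b = C \<union> {z}" using ab(3) by (simp add: g1_def)
      then show ?thesis using nin ga \<open>g b \<noteq> C\<close> by auto
    next
      assume "g a \<noteq> C" "g b = C"
      then have "g a = C \<union> {z}" using ab(3) by (simp add: g1_def)
      then show ?thesis using nin ga \<open>g a \<noteq> C\<close> by auto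
    next
      assume "g a \<noteq> C" "g b \<noteq> C" then show ?thesis using ab(3) by (simp add: g1_def)
    qed
    then show "a = b" using g(1) ab by (auto simp: bij_betw_def inj_on_def)
  qed
  have img: "g1 ` F = insert (C \<union> {z}) (G - {C})"
  proof
    show "g1 ` F \<subseteq> insert (C \<union> {z}) (G - {C})"
      using g(1) by (auto simp: g1_def bij_betw_def)
    show "insert (C \<union> {z}) (G - {C}) \<subseteq> g1 ` F"
    proof
      fix E assume E: "E \<in> insert (C \<union> {z}) (G - {C})"
      show "E \<in> g1 ` F"
      proof (cases "E = C \<union> {z}")
        case True then show ?thesis using D0 by (auto simp: g1_def)
      next
        case False
        then have "E \<in> G" "E \<noteq> C" using E by auto
        then obtain a where "a \<in> F" "g a = E" using g(1) by (auto simp: bij_betw_def)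
        then show ?thesis using \<open>E \<noteq> C\<close> by (auto simp: g1_def intro!: image_eqI[of _ _ a])
      qed
    qed
  qed
  have "\<forall>D\<in>F. D \<subseteq> g1 D" using g(2) by (auto simp: g1_def)
  then show ?thesis using inj img by (auto simp: ext_def bij_betw_def)
qed

lemma saturation_exists:
  assumes mu: "MU F"
  shows "\<exists>G. saturated G \<and> ext F G \<and> var G = var F"
proof -
  define V where "V = var F"
  define S where "S = {G. MU G \<and> var G = V \<and> ext F G}"
  have fV: "finite V" using finite_var MU_fin[OF mu] MU_clfin[OF mu] V_def by blast
  have sub: "S \<subseteq> Pow (Pow (Pos ` V \<union> Neg ` V))"
    using clause_sub_lits unfolding S_def by blast
  have fS: "finite S" using sub fV by (meson finite_Pow_iff finite_UnI finite_imageI finite_subset)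
  have FS: "F \<in> S" unfolding S_def ext_def V_def using mu by (auto intro!: exI[of _ id])
  have neS: "csize ` S \<noteq> {}" using FS by blast
  obtain G where G: "G \<in> S" "csize G = Max (csize ` S)" using Max_in[OF _ neS] fS by (metis finite_imageI imageE)
  have mx: "\<forall>H\<in>S. csize H \<le> csize G" using G fS by simp
  have muG: "MU G" and vG: "var G = V" and eG: "ext F G" using G(1) by (auto simp: S_def)
  have "saturated G"
    unfolding saturated_def
  proof (intro conjI muG ballI allI impI)
    fix C z assume C: "C \<in> G" and vz: "var_lit z \<in> var G" and z: "z \<notin> C" "comp z \<notin> C"
    show "satisfiable (insert (C \<union> {z}) (G - {C}))"
    proof (rule ccontr)
      assume uns: "\<not> satisfiable (insert (C \<union> {z}) (G - {C}))"
      note st = sat_step[OF muG C vz z uns]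
      have "insert (C \<union> {z}) (G - {C}) \<in> S"
        using st ext_step[OF eG C st(2)] vG unfolding S_def by auto
      then have le: "csize (insert (C \<union> {z}) (G - {C})) \<le> csize G" using mx by blast
      have fG: "finite G" using MU_fin[OF muG] .
      have fC: "finite C" using MU_clfin[OF muG] C by blast
      have "csize (insert (C \<union> {z}) (G - {C})) = card (C \<union> {z}) + csize (G - {C})"
        unfolding csize_def using fG st(2) by simp
      also have "card (C \<union> {z}) = card C + 1" using fC z by simp
      also have "csize G = card C + csize (G - {C})"
        unfolding csize_def using fG C by (simp add: sum.remove)
      ultimately show False using le by linarith
    qed
  qed
  then show ?thesis using eG vG V_def by blast
qed

lemma ext_vdeg:
  assumes e: "ext F G" and cF: "is_clause_set F" and cG: "is_clause_set G"
  shows "vdeg F w \<le> vdeg G w"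
proof -
  obtain g where g: "bij_betw g F G" "\<forall>C\<in>F. C \<subseteq> g C" using e by (auto simp: ext_def)
  have fG: "finite G" using cG by (simp add: is_clause_set_def)
  have "card {C\<in>F. w \<in> var_lit ` C} = card (g ` {C\<in>F. w \<in> var_lit ` C})"
    using g(1) by (intro card_image[symmetric]) (auto simp: bij_betw_def intro: inj_on_subset)
  also have "\<dots> \<le> card {D\<in>G. w \<in> var_lit ` D}"
  proof (rule card_mono)
    show "finite {D\<in>G. w \<in> var_lit ` D}" using fG by simp
    show "g ` {C\<in>F. w \<in> var_lit ` C} \<subseteq> {D\<in>G. w \<in> var_lit ` D}"
      using g by (auto simp: bij_betw_def)
  qed
  finally show ?thesis using vdeg_card[OF cF] vdeg_card[OF cG] by simp
qed

lemma ext_card: "ext F G \<Longrightarrow> card G = card F"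
  by (auto simp: ext_def bij_betw_same_card)



lemma vdeg_lits: "vdeg F (var_lit y) = ld F y + ld F (comp y)"
  by (cases y) (auto simp: vdeg_def)

lemma MU_cs: "MU F \<Longrightarrow> is_clause_set F" by (simp add: MU_def)

lemma ld_pos: assumes "MU F" "var_lit z \<in> var F" shows "ld F z \<ge> 1"
proof -
  obtain E where "E \<in> F" "z \<in> E" using pure[OF assms] by blast
  then have "{C\<in>F. z \<in> C} \<noteq> {}" by blast
  moreover have "finite {C\<in>F. z \<in> C}" using MU_fin[OF assms(1)] by simp
  ultimately show ?thesis unfolding ld_def by (simp add: Suc_le_eq card_gt_0_iff)
qed

lemma vdeg_split:
  assumes "MU F" "w \<noteq> var_lit y"
  shows "vdeg F w \<le> ld F y + card {C\<in>F. y \<notin> C \<and> w \<in> var_lit ` C}"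
proof -
  have fF: "finite F" using MU_fin[OF assms(1)] .
  have "vdeg F w = card {C\<in>F. w \<in> var_lit ` C}" using vdeg_card MU_cs[OF assms(1)] by blast
  also have "\<dots> \<le> card ({C\<in>F. y \<in> C} \<union> {C\<in>F. y \<notin> C \<and> w \<in> var_lit ` C})"
    by (rule card_mono) (use fF in auto)
  also have "\<dots> \<le> card {C\<in>F. y \<in> C} + card {C\<in>F. y \<notin> C \<and> w \<in> var_lit ` C}"
    by (rule card_Un_le)
  finally show ?thesis by (simp add: ld_def)
qed

lemma var_empty_card:
  assumes "is_clause_set F" "var F = {}"
  shows "card F \<le> 1"
proof -
  have "F \<subseteq> {{}}" using assms by (auto simp: var_def)
  then show ?thesis by (metis card.empty card_mono card_insert_if finite.emptyI finite.insertI empty_iff le_numeral_extra(4) One_nat_def)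
qed

lemma singular:
  assumes sat: "saturated G" and vy: "var_lit y \<in> var G" and ld1: "ld G y = 1"
    and minM: "\<forall>w\<in>var G. M \<le> vdeg G w" and vM: "vdeg G (var_lit y) = M"
  shows "var (res G y) = var G - {var_lit y}" "card (res G y) = card G - 1"
    "\<forall>w\<in>var (res G y). M \<le> vdeg (res G y) w"
proof -
  have mu: "MU G" using sat by (simp add: saturated_def)
  have fG: "finite G" using MU_fin[OF mu] .
  obtain C where Cs: "{C'\<in>G. y \<in> C'} = {C}" using ld1 unfolding ld_def by (meson card_1_singletonE)
  have C: "C \<in> G" "y \<in> C" using Cs by auto
  have clC: "is_clause C" using MU_cl[OF mu C(1)] .
  have uniq: "\<And>E. E \<in> G \<Longrightarrow> y \<in> E \<Longrightarrow> E = C" using Cs by blast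
  have flip: False if phi: "\<forall>E\<in>G - {D}. \<exists>l\<in>E. lit_true \<phi> l" and D: "comp y \<in> D"
     and z: "z \<in> C" "z \<noteq> y" "lit_true \<phi> z" for \<phi> D z
  proof -
    have vz: "var_lit z \<noteq> var_lit y"
    proof
      assume "var_lit z = var_lit y"
      then have "z = comp y" using same_var z(2) by blast
      then show False using clC C(2) z(1) clause_not_both by blast
    qed
    have "\<forall>E\<in>G. \<exists>l\<in>E. lit_true (upd \<phi> (comp y)) l"
    proof
      fix E assume E: "E \<in> G"
      show "\<exists>l\<in>E. lit_true (upd \<phi> (comp y)) l"
      proof (cases "comp y \<in> E")
        case True then show ?thesis using upd_y by blast
      next
        case False
        then have "E \<noteq> D" using D by blast
        then obtain l where l: "l \<in> E" "lit_true \<phi> l" using phi E by blast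
        show ?thesis
        proof (cases "var_lit l = var_lit y")
          case True
          then have "l = y \<or> l = comp y" using same_var by blast
          then have "l = y" using False l(1) by blast
          then have "E = C" using uniq E l(1) by blast
          moreover have "lit_true (upd \<phi> (comp y)) z" using upd_other[of z "comp y" \<phi>] vz z(3) by simp
          ultimately show ?thesis using z(1) by blast
        next
          case False
          then show ?thesis using l upd_other[of l "comp y" \<phi>] by auto
        qed
      qed
    qed
    then show False by (rule unsat_sat[OF mu])
  qed
  have key: "z \<in> D" if D: "D \<in> G" "comp y \<in> D" and z: "z \<in> C" "z \<noteq> y" for D z
  proof (rule ccontr)
    assume zD: "z \<notin> D"
    show False
    proof (cases "comp z \<in> D")
      case True
      have "satisfiable (G - {D})" using mu D(1) unfolding MU_def by blast
      then obtain \<phi> where phi: "\<forall>E\<in>G - {D}. \<exists>l\<in>E. lit_true \<phi> l" unfolding satisfiable_def by blast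
      have "\<forall>l\<in>D. \<not> lit_true \<phi> l"
      proof (rule ccontr)
        assume "\<not> (\<forall>l\<in>D. \<not> lit_true \<phi> l)"
        then have "\<forall>E\<in>G. \<exists>l\<in>E. lit_true \<phi> l" using phi by blast
        then show False by (rule unsat_sat[OF mu])
      qed
      then have "lit_true \<phi> z" using True by fastforce
      then show False using flip[OF phi D(2) z] by blast
    next
      case False
      have vz: "var_lit z \<in> var G" using z C(1) by (auto simp: var_def)
      have "satisfiable (insert (D \<union> {z}) (G - {D}))" using sat D(1) vz zD False
        unfolding saturated_def by blast
      then obtain \<psi> where psi: "\<forall>E\<in>insert (D \<union> {z}) (G - {D}). \<exists>l\<in>E. lit_true \<psi> l"
        unfolding satisfiable_def by blast
      have "\<forall>l\<in>D. \<not> lit_true \<psi> l"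
      proof (rule ccontr)
        assume "\<not> (\<forall>l\<in>D. \<not> lit_true \<psi> l)"
        then have "\<forall>E\<in>G. \<exists>l\<in>E. lit_true \<psi> l" using psi by blast
        then show False by (rule unsat_sat[OF mu])
      qed
      then have "lit_true \<psi> z" using psi by auto
      moreover have "\<forall>E\<in>G - {D}. \<exists>l\<in>E. lit_true \<psi> l" using psi by blast
      ultimately show False using flip D(2) z by blast
    qed
  qed
  have Mpos: "M \<ge> 1" using vM ld1 vdeg_lits[of G y] by simp
  have vb: "M \<le> vdeg (res G y) w" if w: "w \<in> var G" "w \<noteq> var_lit y" for w
  proof -
    have eq: "vdeg (res G y) w = card {D\<in>G. y \<notin> D \<and> w \<in> var_lit ` D}"
      using res_vdeg[OF sat vy w(2)] .
    have fin: "finite {D\<in>G. y \<notin> D \<and> w \<in> var_lit ` D}" using fG by simp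
    show ?thesis
    proof (cases "w \<in> var_lit ` C")
      case False
      have "{D\<in>G. y \<notin> D \<and> w \<in> var_lit ` D} = {D\<in>G. w \<in> var_lit ` D}"
        using uniq False by blast
      then have "vdeg (res G y) w = vdeg G w" using eq vdeg_card[OF MU_cs[OF mu]] by simp
      then show ?thesis using minM w(1) by simp
    next
      case True
      then obtain z where z: "z \<in> C" "var_lit z = w" by blast
      have zy: "z \<noteq> y" using z w(2) by blast
      have vz: "var_lit (comp z) \<in> var G" using z w(1) by simp
      obtain E where E: "E \<in> G" "comp z \<in> E" using pure[OF mu vz] by blast
      have sub: "insert E {D\<in>G. comp y \<in> D} \<subseteq> {D\<in>G. y \<notin> D \<and> w \<in> var_lit ` D}"
      proof
        fix D assume D: "D \<in> insert E {D\<in>G. comp y \<in> D}"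
        show "D \<in> {D\<in>G. y \<notin> D \<and> w \<in> var_lit ` D}"
        proof (cases "D = E")
          case True
          have "E \<noteq> C" using E(2) z(1) clC clause_not_both by blast
          then have "y \<notin> E" using uniq E(1) by blast
          moreover have "w \<in> var_lit ` E" using E(2) z(2) by (metis image_eqI var_comp)
          ultimately show ?thesis using True E(1) by blast
        next
          case False
          then have D': "D \<in> G" "comp y \<in> D" using D by auto
          have "y \<notin> D" using D' MU_cl[OF mu D'(1)] clause_not_both[of D "comp y"] by auto
          moreover have "z \<in> D" using key[OF D' z(1) zy] .
          ultimately show ?thesis using D'(1) z(2) by blast
        qed
      qed
      have Enot: "E \<notin> {D\<in>G. comp y \<in> D}"
      proof
        assume "E \<in> {D\<in>G. comp y \<in> D}"
        then have "z \<in> E" using key E(1) z(1) zy by blast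
        then show False using E(2) MU_cl[OF mu E(1)] clause_not_both by blast
      qed
      have "card (insert E {D\<in>G. comp y \<in> D}) = 1 + ld G (comp y)"
        using Enot fG by (simp add: ld_def)
      also have "\<dots> = M" using vM ld1 vdeg_lits[of G y] by simp
      finally have "M \<le> card {D\<in>G. y \<notin> D \<and> w \<in> var_lit ` D}" using card_mono[OF fin sub] by simp
      then show ?thesis using eq by simp
    qed
  qed
  show vr: "var (res G y) = var G - {var_lit y}"
  proof
    show "var (res G y) \<subseteq> var G - {var_lit y}" by (rule res_var)
    show "var G - {var_lit y} \<subseteq> var (res G y)"
    proof
      fix w assume w: "w \<in> var G - {var_lit y}"
      then have "vdeg (res G y) w \<ge> 1" using vb Mpos by force
      then have "card {D\<in>res G y. w \<in> var_lit ` D} \<noteq> 0"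
        using vdeg_card[OF MU_cs[OF res_MU[OF sat vy]]] by simp
      then obtain D where "D \<in> res G y" "w \<in> var_lit ` D" by (metis (no_types, lifting) Collect_empty_eq card.empty)
      then show "w \<in> var (res G y)" by (auto simp: var_def)
    qed
  qed
  show "card (res G y) = card G - 1" using res_card[OF sat vy] ld1 by simp
  show "\<forall>w\<in>var (res G y). M \<le> vdeg (res G y) w" using vr vb by blast
qed



lemma nonsingular:
  assumes sat: "saturated G" and vy: "var_lit y \<in> var G" and e2: "ld G y \<ge> 2"
    and minM: "\<forall>w\<in>var G. M \<le> vdeg G w" and vM: "vdeg G (var_lit y) = M"
    and def: "deficiency G = int k" and vf: "valid_bounds_function f"
  shows "ld G y \<le> k" "enat M \<le> f (k - ld G y + 1) + enat (ld G y)"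
proof -
  have mu: "MU G" using sat by (simp add: saturated_def)
  have fG: "finite G" using MU_fin[OF mu] .
  have fvG: "finite (var G)" using finite_var fG MU_clfin[OF mu] by blast
  define e where "e = ld G y"
  have e1: "ld G (comp y) \<ge> 1" using ld_pos[OF mu] vy by simp
  have Me: "M = e + ld G (comp y)" using vM vdeg_lits[of G y] e_def by simp
  define R where "R = res G y"
  have muR: "MU R" using res_MU[OF sat vy] R_def by simp
  have cR: "card R = card G - e" using res_card[OF sat vy] R_def e_def by simp
  have eG: "e \<le> card G" unfolding e_def ld_def using fG by (intro card_mono) auto
  have vR: "var R = var G - {var_lit y}"
  proof
    show "var R \<subseteq> var G - {var_lit y}" using res_var R_def by simp
    show "var G - {var_lit y} \<subseteq> var R"
    proof
      fix w assume w: "w \<in> var G - {var_lit y}"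
      show "w \<in> var R"
      proof (rule ccontr)
        assume nw: "w \<notin> var R"
        have "{D\<in>R. w \<in> var_lit ` D} = {}" using nw by (auto simp: var_def)
        then have "vdeg R w = 0" using vdeg_card[OF MU_cs[OF muR], of w] by (metis card.empty)
        then have "card {C\<in>G. y \<notin> C \<and> w \<in> var_lit ` C} = 0" using res_vdeg[OF sat vy] w R_def by simp
        then have "vdeg G w \<le> e" using vdeg_split[OF mu, of w y] w e_def by simp
        moreover have "M \<le> vdeg G w" using minM w by blast
        ultimately show False using Me e1 by simp
      qed
    qed
  qed
  have vyG: "var_lit y \<in> var G" using vy .
  have cvR: "card (var R) = card (var G) - 1" using vR fvG vyG by simp
  have cvG: "card (var G) \<ge> 1" using fvG vyG by (metis One_nat_def Suc_leI card_gt_0_iff empty_iff)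
  have ta: "card (var R) < card R" using tarsi[OF muR] .
  have defG: "int (card G) - int (card (var G)) = int k" using def by (simp add: deficiency_def)
  show ek: "ld G y \<le> k" using ta cR cvR cvG defG eG e_def by linarith
  have vRne: "var R \<noteq> {}"
  proof
    assume "var R = {}"
    then have vG1: "var G = {var_lit y}" using vR vyG by blast
    have "{C\<in>G. y \<in> C} \<subseteq> {{y}}"
    proof
      fix C assume C: "C \<in> {C\<in>G. y \<in> C}"
      have "C \<subseteq> {y}"
      proof
        fix l assume l: "l \<in> C"
        then have "var_lit l \<in> var G" using C by (auto simp: var_def)
        then have "var_lit l = var_lit y" using vG1 by simp
        then have "l = y \<or> l = comp y" using same_var by blast
        moreover have "comp y \<notin> C" using C MU_cl[OF mu] clause_not_both by blast
        ultimately show "l \<in> {y}" using l by blast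
      qed
      then show "C \<in> {{y}}" using C by blast
    qed
    then have "e \<le> 1" unfolding e_def ld_def by (metis card.empty card.insert card_mono finite.emptyI finite.insertI empty_iff One_nat_def)
    then show False using e2 e_def by simp
  qed
  have defR: "deficiency R = int (k - e + 1)"
    using cR cvR cvG defG eG ek e_def unfolding deficiency_def by simp
  have RD: "R \<in> MU_delta (k - e + 1)" using muR defR by (simp add: MU_delta_def)
  have "enat (minvdeg R) \<le> mu (k - e + 1)"
    unfolding mu_def minvdeg_class_def using RD vRne by (intro Sup_upper) blast
  also have "\<dots> \<le> f (k - e + 1)" using vf by (simp add: valid_bounds_function_def)
  finally have mf: "enat (minvdeg R) \<le> f (k - e + 1)" .
  have fvR: "finite (var R)" using fvG vR by simp
  have "Min (vdeg R ` var R) \<in> vdeg R ` var R" using Min_in[of "vdeg R ` var R"] fvR vRne by blast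
  then obtain w where w: "w \<in> var R" "vdeg R w = minvdeg R" unfolding minvdeg_def by force
  have wG: "w \<in> var G" "w \<noteq> var_lit y" using w vR by auto
  have "vdeg G w \<le> e + vdeg R w" using vdeg_split[OF mu wG(2)] res_vdeg[OF sat vy wG(2)] R_def e_def by simp
  moreover have "M \<le> vdeg G w" using minM wG by blast
  ultimately have "enat M \<le> enat (minvdeg R) + enat e" using w by simp
  also have "\<dots> \<le> f (k - e + 1) + enat e" using mf by (rule add_right_mono)
  finally show "enat M \<le> f (k - ld G y + 1) + enat (ld G y)" using e_def by simp
qed

lemma cond_shift:
  assumes mono: "mono_on {1..} f" and ae: "a \<le> e" and ek: "e \<le> k"
    and h: "enat M \<le> f (k - e + 1) + enat e" and d: "e - a \<le> M - m" and Mm: "m \<le> M"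
  shows "enat m \<le> f (k - a + 1) + enat a"
proof -
  have le: "f (k - e + 1) \<le> f (k - a + 1)"
    using mono ae ek by (intro mono_onD[OF mono]) auto
  show ?thesis
  proof (cases "f (k - e + 1)")
    case infinity
    then have "f (k - a + 1) = \<infinity>" using le by simp
    then show ?thesis by simp
  next
    case (enat t)
    then have "M \<le> t + e" using h by simp
    then have "m \<le> t + a" using d ae Mm by linarith
    then have "enat m \<le> enat t + enat a" by simp
    also have "\<dots> \<le> f (k - a + 1) + enat a" using le enat by (intro add_right_mono) simp
    finally show ?thesis .
  qed
qed

lemma pdp_ne:
  assumes mono: "mono_on {1..} f" and e: "2 \<le> e0" "2 \<le> e1" "e0 \<le> k" "e1 \<le> k"
    and Mm: "m \<le> e0 + e1" and m4: "4 \<le> m"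
    and h0: "enat (e0 + e1) \<le> f (k - e0 + 1) + enat e0"
    and h1: "enat (e0 + e1) \<le> f (k - e1 + 1) + enat e1"
  shows "pdp f k m \<noteq> {}"
proof -
  define d where "d = e0 + e1 - m"
  define a0 where "a0 = max 2 (e0 - d)"
  define a1 where "a1 = m - a0"
  have a0: "2 \<le> a0" "a0 \<le> e0" "a0 \<le> m - 2" using e Mm m4 unfolding a0_def d_def by auto
  have a1: "2 \<le> a1" "a1 \<le> e1" "a0 + a1 = m" using a0 e Mm m4 unfolding a1_def a0_def d_def by auto
  have c0: "enat m \<le> f (k - a0 + 1) + enat a0"
    by (rule cond_shift[OF mono a0(2) e(3) h0]) (use a0 a1 Mm d_def in auto)
  have c1: "enat m \<le> f (k - a1 + 1) + enat a1"
    by (rule cond_shift[OF mono a1(2) e(4) h1]) (use a0 a1 Mm d_def in auto)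
  have "(min a0 a1, max a0 a1) \<in> pdp f k m"
    using a0 a1 c0 c1 e unfolding pdp_def by (auto simp: min_def max_def)
  then show ?thesis by blast
qed



lemma minvdeg_attained:
  assumes "finite (var F)" "var F \<noteq> {}"
  obtains v where "v \<in> var F" "vdeg F v = minvdeg F" "\<forall>w\<in>var F. minvdeg F \<le> vdeg F w"
proof -
  have "Min (vdeg F ` var F) \<in> vdeg F ` var F" using Min_in[of "vdeg F ` var F"] assms by blast
  then obtain v where "v \<in> var F" "vdeg F v = minvdeg F" unfolding minvdeg_def by force
  moreover have "\<forall>w\<in>var F. minvdeg F \<le> vdeg F w" unfolding minvdeg_def using assms by simp
  ultimately show ?thesis using that by blast
qed

lemma main_ind:
  assumes k2: "k \<ge> 2" and m4: "m \<ge> 4" and vf: "valid_bounds_function f" and pe: "pdp f k m = {}"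
  shows "MU F \<Longrightarrow> deficiency F = int k \<Longrightarrow> var F \<noteq> {} \<Longrightarrow> minvdeg F < m"
proof (induction "card (var F)" arbitrary: F rule: less_induct)
  case less
  show ?case
  proof (rule ccontr)
    assume nm: "\<not> minvdeg F < m"
    have muF: "MU F" using less.prems(1) .
    obtain G where G: "saturated G" "ext F G" "var G = var F" using saturation_exists[OF muF] by blast
    have muG: "MU G" using G(1) by (simp add: saturated_def)
    have fvF: "finite (var F)" using finite_var MU_fin[OF muF] MU_clfin[OF muF] by blast
    have defG: "deficiency G = int k" using less.prems(2) ext_card[OF G(2)] G(3) by (simp add: deficiency_def)
    have fvG: "finite (var G)" using fvF G(3) by simp
    have vGne: "var G \<noteq> {}" using less.prems(3) G(3) by simp
    obtain v where v: "v \<in> var G" "vdeg G v = minvdeg G" "\<forall>w\<in>var G. minvdeg G \<le> vdeg G w"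
      using minvdeg_attained[OF fvG vGne] by blast
    define M where "M = vdeg G v"
    have minM: "\<forall>w\<in>var G. M \<le> vdeg G w" using v M_def by simp
    have "minvdeg F \<le> vdeg F v" using v(1) G(3) fvF unfolding minvdeg_def by simp
    also have "vdeg F v \<le> vdeg G v" using ext_vdeg[OF G(2) MU_cs[OF muF] MU_cs[OF muG]] .
    finally have Mm: "m \<le> M" using nm M_def by simp
    define y0 where "y0 = Pos v"
    define y1 where "y1 = Neg v"
    have vy: "var_lit y0 = v" "var_lit y1 = v" "comp y0 = y1" "comp y1 = y0" by (simp_all add: y0_def y1_def)
    have Msum: "M = ld G y0 + ld G y1" using vdeg_lits[of G y0] vy M_def by simp
    have l0: "ld G y0 \<ge> 1" using ld_pos[OF muG] v(1) vy by simp
    have l1: "ld G y1 \<ge> 1" using ld_pos[OF muG] v(1) vy by simp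
    have nsing: False if y: "var_lit y = v" "ld G y = 1" for y
    proof -
      have vy': "var_lit y \<in> var G" using y v(1) by simp
      have vM: "vdeg G (var_lit y) = M" using y M_def by simp
      note S = singular[OF G(1) vy' y(2) minM vM]
      define R where "R = res G y"
      have muR: "MU R" using res_MU[OF G(1) vy'] R_def by simp
      have cvR: "card (var R) = card (var G) - 1" using S(1) fvG vy' R_def by simp
      have cvG: "card (var G) \<ge> 1" using fvG v(1) by (metis One_nat_def Suc_leI card_gt_0_iff empty_iff)
      have dG: "int (card G) - int (card (var G)) = int k" using defG by (simp add: deficiency_def)
      have defR: "deficiency R = int k" using S(2) cvR cvG dG k2 R_def unfolding deficiency_def by simp
      have vRne: "var R \<noteq> {}"
      proof
        assume "var R = {}"
        then have "card R \<le> 1" using var_empty_card[OF MU_cs[OF muR]] by simp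
        then show False using defR k2 \<open>var R = {}\<close> unfolding deficiency_def by simp
      qed
      have lt: "card (var R) < card (var F)" using cvR cvG G(3) by simp
      have "minvdeg R < m" using less.hyps[OF lt muR defR vRne] .
      moreover have fvR: "finite (var R)" using fvG S(1) R_def by simp
      obtain w where "w \<in> var R" "vdeg R w = minvdeg R" "\<forall>u\<in>var R. minvdeg R \<le> vdeg R u"
        using minvdeg_attained[OF fvR vRne] by blast
      moreover have "M \<le> vdeg R w" using S(3) R_def \<open>w \<in> var R\<close> by blast
      ultimately show False using Mm by simp
    qed
    have e0: "ld G y0 \<ge> 2" using l0 nsing[of y0] vy by fastforce
    have e1: "ld G y1 \<ge> 2" using l1 nsing[of y1] vy by fastforce
    have vy0: "var_lit y0 \<in> var G" "vdeg G (var_lit y0) = M" using vy v(1) M_def by auto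
    have vy1: "var_lit y1 \<in> var G" "vdeg G (var_lit y1) = M" using vy v(1) M_def by auto
    note N0 = nonsingular[OF G(1) vy0(1) e0 minM vy0(2) defG vf]
    note N1 = nonsingular[OF G(1) vy1(1) e1 minM vy1(2) defG vf]
    have mono: "mono_on {1..} f" using vf by (simp add: valid_bounds_function_def)
    have "pdp f k m \<noteq> {}"
      using pdp_ne[OF mono e0 e1 N0(1) N1(1), of m] Mm Msum m4 N0(2) N1(2) by simp
    then show False using pe by simp
  qed
qed

theorem theorem13p10:
  fixes k m :: nat and f :: "nat \<Rightarrow> enat"
  assumes "k \<ge> 2" and "m \<ge> 4"
    and "valid_bounds_function f"
    and "pdp f k m = {}"
  shows "minvdeg_class (MU_delta k) < enat m"
proof -
  have "minvdeg_class (MU_delta k) \<le> enat (m - 1)"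
    unfolding minvdeg_class_def
  proof (rule Sup_least)
    fix x assume "x \<in> {enat (minvdeg F) |F. F \<in> MU_delta k \<and> var F \<noteq> {}}"
    then obtain F where F: "x = enat (minvdeg F)" "F \<in> MU_delta k" "var F \<noteq> {}" by blast
    have "minvdeg F < m" using main_ind[OF assms] F by (simp add: MU_delta_def)
    then show "x \<le> enat (m - 1)" using F(1) by simp
  qed
  also have "\<dots> < enat m" using assms(2) by simp
  finally show ?thesis .
qed


end
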